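(* Let $A=\mathrm{Sym}(\mathrm{Sym}^2(\mathbb{C}^\infty))=\mathbb{C}[x_{i,j}]$, $K=\mathrm{Frac}(A)$, and $\mathfrak{m}$ the ideal generated by $x_{i,i}-1$ and $x_{i,j}$ ($i\ne j$). If $M$ is an $A$-module with $M\otimes_AK=0$, then $M/\mathfrak{m}M=0$.
   Context: An $A$-module is an $A$-module with a compatible action of $\mathrm{GL}_\infty=\bigcup_n\mathrm{GL}_n$ making it a polynomial representation (subquotient of a direct sum of tensor powers of $\mathbb{C}^\infty$). $x_{i,j}=e_ie_j$. *)

theory Defs
  imports Complex_Main "HOL-Library.Poly_Mapping"
begin

text \<open>Variables x_{i,j} = x_{j,i} are indexed by pairs (i,j) with i <= j.\<close>
typedef sym2 = "{p :: nat \<times> nat. fst p \<le> snd p}"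
  by auto

text \<open>Polynomial ring in the variables x_{i,j} (i <= j): finitely supported
  functions from monomials (finitely supported exponent vectors) to C.\<close>
type_synonym polyA = "(sym2 \<Rightarrow>\<^sub>0 nat) \<Rightarrow>\<^sub>0 complex"

definition constA :: "complex \<Rightarrow> polyA" where
  "constA c = Poly_Mapping.single 0 c"

definition xvar :: "nat \<Rightarrow> nat \<Rightarrow> polyA" where
  "xvar i j = Poly_Mapping.single (Poly_Mapping.single (Abs_sym2 (min i j, max i j)) 1) 1"

text \<open>Infinite matrices (entry g i j: row i, column j) that agree with the identity
  outside the block {0..<n} x {0..<n}.\<close>
definition id_outside :: "nat \<Rightarrow> (nat \<Rightarrow> nat \<Rightarrow> complex) \<Rightarrow> bool" where
  "id_outside n g \<longleftrightarrow> (\<forall>i j. (n \<le> i \<or> n \<le> j) \<longrightarrow> g i j = (if i = j then 1 else 0))"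

definition GLinf :: "(nat \<Rightarrow> nat \<Rightarrow> complex) set" where
  "GLinf = {g. \<exists>n. id_outside n g \<and> (\<exists>h. id_outside n h \<and>
       (\<forall>i<n. \<forall>j<n. (\<Sum>k<n. g i k * h k j) = (if i = j then 1 else 0)))}"

text \<open>Matrix product (the sum is finite for elements of GLinf).\<close>
definition gmul :: "(nat \<Rightarrow> nat \<Rightarrow> complex) \<Rightarrow> (nat \<Rightarrow> nat \<Rightarrow> complex) \<Rightarrow> nat \<Rightarrow> nat \<Rightarrow> complex" where
  "gmul g h i j = (\<Sum>k\<in>{k. g i k * h k j \<noteq> 0}. g i k * h k j)"

definition gone :: "nat \<Rightarrow> nat \<Rightarrow> complex" where
  "gone i j = (if i = j then 1 else 0)"

text \<open>g . x_{i,j} = (g e_i)(g e_j) = sum_{k,l} g_{k,i} g_{l,j} x_{k,l}.\<close>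
definition gvar :: "(nat \<Rightarrow> nat \<Rightarrow> complex) \<Rightarrow> nat \<Rightarrow> nat \<Rightarrow> polyA" where
  "gvar g i j = (\<Sum>(k, l)\<in>{(k, l). g k i * g l j \<noteq> 0}. constA (g k i * g l j) * xvar k l)"

definition gactA :: "(nat \<Rightarrow> nat \<Rightarrow> complex) \<Rightarrow> polyA \<Rightarrow> polyA" where
  "gactA g p = (\<Sum>\<mu>\<in>Poly_Mapping.keys p. constA (Poly_Mapping.lookup p \<mu>) *
      (\<Prod>v\<in>Poly_Mapping.keys \<mu>. (case Rep_sym2 v of (i, j) \<Rightarrow> gvar g i j) ^ Poly_Mapping.lookup \<mu> v))"

text \<open>For an index type 't and degrees deg :: 't => nat, the direct sum
  (+)_{t} T^{deg t}(C^infinity) is realized inside ('t x nat list) =>0 C: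
  the basis vector (t, [w_1,...,w_d]) stands for e_{w_1} (x) ... (x) e_{w_d}
  in the summand t.\<close>
definition tensum :: "('t \<Rightarrow> nat) \<Rightarrow> (('t \<times> nat list) \<Rightarrow>\<^sub>0 complex) set" where
  "tensum deg = {v. \<forall>(t, w)\<in>Poly_Mapping.keys v. length w = deg t}"

definition tscale :: "complex \<Rightarrow> ('b \<Rightarrow>\<^sub>0 complex) \<Rightarrow> ('b \<Rightarrow>\<^sub>0 complex)" where
  "tscale c v = Poly_Mapping.map (\<lambda>x. c * x) v"

text \<open>g (e_{w_1} (x) ... (x) e_{w_d}) = sum_u (prod_k g_{u_k,w_k}) e_{u_1} (x) ... (x) e_{u_d}.\<close>
definition tcoef :: "(nat \<Rightarrow> nat \<Rightarrow> complex) \<Rightarrow> nat list \<Rightarrow> nat list \<Rightarrow> complex" where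
  "tcoef g u w = (\<Prod>k<length w. g (u ! k) (w ! k))"

definition tact :: "(nat \<Rightarrow> nat \<Rightarrow> complex) \<Rightarrow> (('t \<times> nat list) \<Rightarrow>\<^sub>0 complex) \<Rightarrow> (('t \<times> nat list) \<Rightarrow>\<^sub>0 complex)" where
  "tact g v = (\<Sum>(t, w)\<in>Poly_Mapping.keys v.
      \<Sum>u\<in>{u. length u = length w \<and> tcoef g u w \<noteq> 0}.
         Poly_Mapping.single (t, u) (Poly_Mapping.lookup v (t, w) * tcoef g u w))"

definition compatible_GL_action ::
  "(polyA \<Rightarrow> 'm::ab_group_add \<Rightarrow> 'm) \<Rightarrow> ((nat \<Rightarrow> nat \<Rightarrow> complex) \<Rightarrow> 'm \<Rightarrow> 'm) \<Rightarrow> bool" where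
  "compatible_GL_action smult act \<longleftrightarrow>
     (\<forall>m. act gone m = m) \<and>
     (\<forall>g\<in>GLinf. \<forall>h\<in>GLinf. \<forall>m. act (gmul g h) m = act g (act h m)) \<and>
     (\<forall>g\<in>GLinf. \<forall>m m'. act g (m + m') = act g m + act g m') \<and>
     (\<forall>g\<in>GLinf. \<forall>c m. act g (smult (constA c) m) = smult (constA c) (act g m)) \<and>
     (\<forall>g\<in>GLinf. \<forall>a m. act g (smult a m) = smult (gactA g a) (act g m))"

text \<open>Polynomial representation: a subquotient of a direct sum of tensor powers of
  C^infinity, i.e. M is the image of a GL-stable C-subspace N of
  (+)_t T^{deg t}(C^infinity) under a surjective C-linear GL-equivariant map phi
  (so M = N / ker phi).\<close>
definition polynomial_rep_via ::
  "('t \<Rightarrow> nat) \<Rightarrow> (polyA \<Rightarrow> 'm::ab_group_add \<Rightarrow> 'm) \<Rightarrow> ((nat \<Rightarrow> nat \<Rightarrow> complex) \<Rightarrow> 'm \<Rightarrow> 'm) \<Rightarrow> bool" where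
  "polynomial_rep_via deg smult act \<longleftrightarrow>
     (\<exists>N phi. N \<subseteq> tensum deg \<and> 0 \<in> N \<and>
        (\<forall>v\<in>N. \<forall>v'\<in>N. v + v' \<in> N) \<and> (\<forall>c. \<forall>v\<in>N. tscale c v \<in> N) \<and>
        (\<forall>g\<in>GLinf. \<forall>v\<in>N. tact g v \<in> N) \<and>
        (\<forall>v\<in>N. \<forall>v'\<in>N. phi (v + v') = phi v + phi v') \<and>
        (\<forall>c. \<forall>v\<in>N. phi (tscale c v) = smult (constA c) (phi v)) \<and>
        (\<forall>g\<in>GLinf. \<forall>v\<in>N. phi (tact g v) = act g (phi v)) \<and>
        phi ` N = (UNIV :: 'm set))"

text \<open>M (x)_A K is the localization S^{-1} M, S = A - {0}: pairs (m, s) modulo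
  (m,s) ~ (m',s') iff u (s' m - s m') = 0 for some u in S.\<close>
definition loc_rel :: "(polyA \<Rightarrow> 'm::ab_group_add \<Rightarrow> 'm) \<Rightarrow> 'm \<times> polyA \<Rightarrow> 'm \<times> polyA \<Rightarrow> bool" where
  "loc_rel smult p q \<longleftrightarrow> (case p of (m, s) \<Rightarrow> case q of (m', s') \<Rightarrow>
      (\<exists>u. u \<noteq> 0 \<and> smult u (smult s' m - smult s m') = 0))"

definition tensor_frac_zero :: "(polyA \<Rightarrow> 'm::ab_group_add \<Rightarrow> 'm) \<Rightarrow> bool" where
  "tensor_frac_zero smult \<longleftrightarrow> (\<forall>m s. s \<noteq> 0 \<longrightarrow> loc_rel smult (m, s) (0, 1))"

definition max_ideal :: "polyA set" where
  "max_ideal = module.span ((*) :: polyA \<Rightarrow> polyA \<Rightarrow> polyA)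
      ({xvar i i - 1 | i. True} \<union> {xvar i j | i j. i \<noteq> j})"

definition ideal_times :: "(polyA \<Rightarrow> 'm::ab_group_add \<Rightarrow> 'm) \<Rightarrow> polyA set \<Rightarrow> 'm set" where
  "ideal_times smult I = module.span smult {smult a m | a m. a \<in> I}"

end

theory Submission imports Defs "HOL-Computational_Algebra.Polynomial" begin


definition hom :: "(complex \<Rightarrow> 'a::comm_ring_1) \<Rightarrow> bool" where
  "hom \<phi> \<longleftrightarrow> \<phi> 0 = 0 \<and> \<phi> 1 = 1 \<and> (\<forall>a b. \<phi> (a + b) = \<phi> a + \<phi> b) \<and> (\<forall>a b. \<phi> (a * b) = \<phi> a * \<phi> b)"

definition mon :: "(sym2 \<Rightarrow> 'a::comm_ring_1) \<Rightarrow> (sym2 \<Rightarrow>\<^sub>0 nat) \<Rightarrow> 'a" where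
  "mon x \<mu> = (\<Prod>v\<in>Poly_Mapping.keys \<mu>. x v ^ Poly_Mapping.lookup \<mu> v)"

definition ev :: "(complex \<Rightarrow> 'a::comm_ring_1) \<Rightarrow> (sym2 \<Rightarrow> 'a) \<Rightarrow> polyA \<Rightarrow> 'a" where
  "ev \<phi> x p = (\<Sum>\<mu>\<in>Poly_Mapping.keys p. \<phi> (Poly_Mapping.lookup p \<mu>) * mon x \<mu>)"

lemma mon_superset:
  assumes "finite F" "Poly_Mapping.keys \<mu> \<subseteq> F"
  shows "mon x \<mu> = (\<Prod>v\<in>F. x v ^ Poly_Mapping.lookup \<mu> v)"
  unfolding mon_def
  by (rule prod.mono_neutral_left) (use assms in \<open>auto simp: in_keys_iff\<close>)

lemma mon_add: "mon x (\<mu> + \<nu>) = mon x \<mu> * mon x \<nu>"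
proof -
  let ?F = "Poly_Mapping.keys \<mu> \<union> Poly_Mapping.keys \<nu>"
  have "mon x (\<mu> + \<nu>) = (\<Prod>v\<in>?F. x v ^ Poly_Mapping.lookup (\<mu>+\<nu>) v)"
    by (rule mon_superset) (use keys_add[of \<mu> \<nu>] in auto)
  also have "\<dots> = (\<Prod>v\<in>?F. x v ^ Poly_Mapping.lookup \<mu> v) * (\<Prod>v\<in>?F. x v ^ Poly_Mapping.lookup \<nu> v)"
    by (simp add: lookup_add power_add prod.distrib)
  also have "\<dots> = mon x \<mu> * mon x \<nu>"
    by (subst (1 2) mon_superset[where F="?F"]) auto
  finally show ?thesis .
qed

lemma mon_zero[simp]: "mon x 0 = 1"
  by (simp add: mon_def)

lemma mon_single: "mon x (Poly_Mapping.single v k) = x v ^ k"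
  by (simp add: mon_def)

lemma hom_simps:
  assumes "hom \<phi>"
  shows "\<phi> 0 = 0" "\<phi> 1 = 1" "\<phi> (a + b) = \<phi> a + \<phi> b" "\<phi> (a * b) = \<phi> a * \<phi> b"
  using assms by (auto simp: hom_def)

lemma ev_superset:
  assumes "hom \<phi>" "finite F" "Poly_Mapping.keys p \<subseteq> F"
  shows "ev \<phi> x p = (\<Sum>\<mu>\<in>F. \<phi> (Poly_Mapping.lookup p \<mu>) * mon x \<mu>)"
  unfolding ev_def
  by (rule sum.mono_neutral_left) (use assms in \<open>auto simp: in_keys_iff hom_simps\<close>)

lemma ev_add:
  assumes "hom \<phi>"
  shows "ev \<phi> x (p + q) = ev \<phi> x p + ev \<phi> x q"
proof -
  let ?F = "Poly_Mapping.keys p \<union> Poly_Mapping.keys q"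
  have "ev \<phi> x (p + q) = (\<Sum>\<mu>\<in>?F. \<phi> (Poly_Mapping.lookup (p+q) \<mu>) * mon x \<mu>)"
    by (rule ev_superset[OF assms]) (use keys_add[of p q] in auto)
  also have "\<dots> = (\<Sum>\<mu>\<in>?F. \<phi> (Poly_Mapping.lookup p \<mu>) * mon x \<mu>) + (\<Sum>\<mu>\<in>?F. \<phi> (Poly_Mapping.lookup q \<mu>) * mon x \<mu>)"
    by (simp add: lookup_add hom_simps[OF assms] distrib_right sum.distrib)
  also have "\<dots> = ev \<phi> x p + ev \<phi> x q"
    by (subst (1 2) ev_superset[OF assms, where F="?F"]) auto
  finally show ?thesis .
qed

lemma ev_zero[simp]: "ev \<phi> x 0 = 0"
  by (simp add: ev_def)

lemma ev_sum:
  assumes "hom \<phi>"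
  shows "ev \<phi> x (sum f A) = (\<Sum>a\<in>A. ev \<phi> x (f a))"
  by (induction A rule: infinite_finite_induct) (auto simp: ev_add[OF assms])

lemma ev_single:
  assumes "hom \<phi>"
  shows "ev \<phi> x (Poly_Mapping.single \<mu> c) = \<phi> c * mon x \<mu>"
  using assms by (auto simp: ev_def hom_simps)

lemma pm_expansion: "p = (\<Sum>\<mu>\<in>Poly_Mapping.keys p. Poly_Mapping.single \<mu> (Poly_Mapping.lookup p \<mu>))"
proof (rule poly_mapping_eqI)
  fix k
  show "Poly_Mapping.lookup p k = Poly_Mapping.lookup (\<Sum>\<mu>\<in>Poly_Mapping.keys p. Poly_Mapping.single \<mu> (Poly_Mapping.lookup p \<mu>)) k"
    by (simp add: lookup_sum lookup_single when_def in_keys_iff)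
qed

lemma ev_mult:
  assumes "hom \<phi>"
  shows "ev \<phi> x (p * q) = ev \<phi> x p * ev \<phi> x q"
proof -
  have "p * q = (\<Sum>\<mu>\<in>Poly_Mapping.keys p. \<Sum>\<nu>\<in>Poly_Mapping.keys q.
      Poly_Mapping.single \<mu> (Poly_Mapping.lookup p \<mu>) * Poly_Mapping.single \<nu> (Poly_Mapping.lookup q \<nu>))"
    by (subst (1) pm_expansion[of p], subst (1) pm_expansion[of q]) (simp add: sum_distrib_left sum_distrib_right sum.swap[of _ "Poly_Mapping.keys q"])
  then have "ev \<phi> x (p * q) = (\<Sum>\<mu>\<in>Poly_Mapping.keys p. \<Sum>\<nu>\<in>Poly_Mapping.keys q.
      \<phi> (Poly_Mapping.lookup p \<mu>) * mon x \<mu> * (\<phi> (Poly_Mapping.lookup q \<nu>) * mon x \<nu>))"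
    by (simp add: ev_sum[OF assms] mult_single ev_single[OF assms] mon_add hom_simps[OF assms] ac_simps)
  also have "\<dots> = ev \<phi> x p * ev \<phi> x q"
    by (simp add: ev_def sum_distrib_left sum_distrib_right sum.swap[of _ "Poly_Mapping.keys q"])
  finally show ?thesis .
qed

lemma ev_constA:
  assumes "hom \<phi>"
  shows "ev \<phi> x (constA c) = \<phi> c"
  by (simp add: constA_def ev_single[OF assms])

lemma ev_one:
  assumes "hom \<phi>"
  shows "ev \<phi> x 1 = 1"
  using ev_single[OF assms, of x 0 1] by (simp add: hom_simps[OF assms])

lemma ev_prod:
  assumes "hom \<phi>"
  shows "ev \<phi> x (prod f A) = (\<Prod>a\<in>A. ev \<phi> x (f a))"
  by (induction A rule: infinite_finite_induct) (auto simp: ev_mult[OF assms] ev_one[OF assms])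

lemma ev_power:
  assumes "hom \<phi>"
  shows "ev \<phi> x (p ^ k) = ev \<phi> x p ^ k"
  by (induction k) (auto simp: ev_mult[OF assms] ev_one[OF assms])

lemma ev_diff:
  assumes "hom \<phi>"
  shows "ev \<phi> x (p - q) = ev \<phi> x p - ev \<phi> x q"
  using ev_add[OF assms, of x "p - q" q] by simp

lemma hom_id: "hom (\<lambda>c::complex. c)"
  by (simp add: hom_def)

lemma hom_pC: "hom (\<lambda>c::complex. [:c:])"
  by (simp add: hom_def)



lemma module_times: "module ((*) :: polyA \<Rightarrow> polyA \<Rightarrow> polyA)"
  by (unfold_locales) (auto simp: algebra_simps)

definition Ipt :: "sym2 \<Rightarrow> complex" where
  "Ipt v = (if fst (Rep_sym2 v) = snd (Rep_sym2 v) then 1 else 0)"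

definition evI :: "polyA \<Rightarrow> complex" where
  "evI p = ev (\<lambda>c. c) Ipt p"

definition cong_m :: "polyA \<Rightarrow> complex \<Rightarrow> bool" where
  "cong_m a \<alpha> \<longleftrightarrow> a - constA \<alpha> \<in> max_ideal"

lemma constA_add: "constA (a + b) = constA a + constA b"
  by (simp add: constA_def single_add)
lemma constA_mult: "constA (a * b) = constA a * constA b"
  by (simp add: constA_def mult_single)
lemma constA_one[simp]: "constA 1 = 1"
  by (simp add: constA_def)
lemma constA_zero[simp]: "constA 0 = 0"
  by (simp add: constA_def)

lemma mi_add: "a \<in> max_ideal \<Longrightarrow> b \<in> max_ideal \<Longrightarrow> a + b \<in> max_ideal"
  unfolding max_ideal_def by (rule module.span_add[OF module_times])
lemma mi_scale: "a \<in> max_ideal \<Longrightarrow> c * a \<in> max_ideal"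
  unfolding max_ideal_def by (rule module.span_scale[OF module_times])
lemma mi_zero: "0 \<in> max_ideal"
  unfolding max_ideal_def by (rule module.span_zero[OF module_times])

lemma cong_add: "cong_m a \<alpha> \<Longrightarrow> cong_m b \<beta> \<Longrightarrow> cong_m (a + b) (\<alpha> + \<beta>)"
  unfolding cong_m_def using mi_add[of "a - constA \<alpha>" "b - constA \<beta>"]
  by (simp add: constA_add algebra_simps)

lemma cong_mult: "cong_m a \<alpha> \<Longrightarrow> cong_m b \<beta> \<Longrightarrow> cong_m (a * b) (\<alpha> * \<beta>)"
proof -
  assume A: "cong_m a \<alpha>" "cong_m b \<beta>"
  have "a * b - constA (\<alpha> * \<beta>) = b * (a - constA \<alpha>) + constA \<alpha> * (b - constA \<beta>)"
    by (simp add: constA_mult algebra_simps)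
  then show ?thesis using A unfolding cong_m_def by (metis mi_add mi_scale)
qed

lemma cong_const: "cong_m (constA c) c"
  by (simp add: cong_m_def mi_zero)

lemma cong_sum: "(\<And>a. a \<in> A \<Longrightarrow> cong_m (f a) (g a)) \<Longrightarrow> cong_m (sum f A) (sum g A)"
proof (induction A rule: infinite_finite_induct)
  case (insert x F)
  then have "cong_m (f x + sum f F) (g x + sum g F)" by (intro cong_add) auto
  then show ?case using insert by simp
qed (auto simp: cong_m_def mi_zero)

lemma cong_prod: "(\<And>a. a \<in> A \<Longrightarrow> cong_m (f a) (g a)) \<Longrightarrow> cong_m (prod f A) (prod g A)"
proof (induction A rule: infinite_finite_induct)
  case (infinite A)
  then show ?case using cong_const[of 1] by simp
next
  case empty
  then show ?case using cong_const[of 1] by simp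
next
  case (insert x F)
  then show ?case by (simp add: cong_mult)
qed

lemma cong_power: "cong_m a \<alpha> \<Longrightarrow> cong_m (a ^ k) (\<alpha> ^ k)"
  by (induction k) (use cong_const[of 1] in \<open>auto intro: cong_mult\<close>)

definition Xv :: "sym2 \<Rightarrow> polyA" where
  "Xv v = Poly_Mapping.single (Poly_Mapping.single v 1) 1"

lemma Xv_xvar: "Rep_sym2 v = (i, j) \<Longrightarrow> Xv v = xvar i j"
proof -
  assume R: "Rep_sym2 v = (i, j)"
  then have "i \<le> j" using Rep_sym2[of v] by auto
  then have "Abs_sym2 (min i j, max i j) = v" using R Rep_sym2_inverse[of v] by auto
  then show ?thesis by (simp add: Xv_def xvar_def)
qed

lemma cong_Xv: "cong_m (Xv v) (Ipt v)"
proof -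
  obtain i j where R: "Rep_sym2 v = (i, j)" by (cases "Rep_sym2 v") auto
  show ?thesis
  proof (cases "i = j")
    case True
    then have "Xv v - constA (Ipt v) = xvar i i - 1"
      using R by (simp add: Xv_xvar Ipt_def)
    then show ?thesis unfolding cong_m_def max_ideal_def
      by (metis (mono_tags, lifting) UnCI mem_Collect_eq module.span_base module_times)
  next
    case False
    then have "Xv v - constA (Ipt v) = xvar i j"
      using R by (simp add: Xv_xvar Ipt_def)
    then show ?thesis unfolding cong_m_def max_ideal_def
      using False by (metis (mono_tags, lifting) UnCI mem_Collect_eq module.span_base module_times)
  qed
qed

lemma single_prod: "(\<Prod>v\<in>F. Poly_Mapping.single (f v) (1::complex)) = Poly_Mapping.single (\<Sum>v\<in>F. f v) 1"
  by (induction F rule: infinite_finite_induct) (auto simp: mult_single)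

lemma Xv_power: "Xv v ^ k = Poly_Mapping.single (Poly_Mapping.single v k) 1"
  by (induction k) (auto simp: Xv_def mult_single simp flip: single_add)

lemma single_mon: "Poly_Mapping.single \<mu> c = constA c * (\<Prod>v\<in>Poly_Mapping.keys \<mu>. Xv v ^ Poly_Mapping.lookup \<mu> v)"
proof -
  have "(\<Prod>v\<in>Poly_Mapping.keys \<mu>. Xv v ^ Poly_Mapping.lookup \<mu> v)
        = Poly_Mapping.single (\<Sum>v\<in>Poly_Mapping.keys \<mu>. Poly_Mapping.single v (Poly_Mapping.lookup \<mu> v)) 1"
    by (simp add: Xv_power single_prod)
  also have "\<dots> = Poly_Mapping.single \<mu> 1"
    using pm_expansion[of \<mu>] by simp
  finally show ?thesis by (simp add: constA_def mult_single)
qed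

lemma cong_evI: "cong_m p (evI p)"
proof -
  have "p = (\<Sum>\<mu>\<in>Poly_Mapping.keys p. constA (Poly_Mapping.lookup p \<mu>) * (\<Prod>v\<in>Poly_Mapping.keys \<mu>. Xv v ^ Poly_Mapping.lookup \<mu> v))"
    by (subst pm_expansion) (simp add: single_mon)
  moreover have "cong_m (\<Sum>\<mu>\<in>Poly_Mapping.keys p. constA (Poly_Mapping.lookup p \<mu>) * (\<Prod>v\<in>Poly_Mapping.keys \<mu>. Xv v ^ Poly_Mapping.lookup \<mu> v))
     (\<Sum>\<mu>\<in>Poly_Mapping.keys p. Poly_Mapping.lookup p \<mu> * (\<Prod>v\<in>Poly_Mapping.keys \<mu>. Ipt v ^ Poly_Mapping.lookup \<mu> v))"
    by (intro cong_sum cong_mult cong_const cong_prod cong_power cong_Xv)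
  ultimately show ?thesis by (simp add: evI_def ev_def mon_def)
qed

lemma step_b:
  fixes smult :: "polyA \<Rightarrow> 'm::ab_group_add \<Rightarrow> 'm"
  assumes M: "module smult" and z: "smult p m = 0" and nz: "evI p \<noteq> 0"
  shows "m \<in> ideal_times smult max_ideal"
proof -
  define c where "c = evI p"
  define r where "r = p - constA c"
  have r: "r \<in> max_ideal" using cong_evI[of p] by (simp add: cong_m_def r_def c_def)
  have r2: "constA (1/c) * r \<in> max_ideal" by (rule mi_scale[OF r])
  have one: "1 = constA (1/c) * p - constA (1/c) * r"
    using nz by (simp add: r_def algebra_simps c_def flip: constA_mult)
  have "m = smult 1 m" using M by (simp add: module_def)
  also have "\<dots> = smult (constA (1/c) * p) m - smult (constA (1/c) * r) m"
    by (subst one) (simp add: module.scale_left_diff_distrib[OF M])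
  also have "\<dots> = - smult (constA (1/c) * r) m"
    using z by (simp add: module.scale_scale[OF M, symmetric] module.scale_zero_right[OF M])
  finally have eq: "m = - smult (constA (1/c) * r) m" .
  have "smult (constA (1/c) * r) m \<in> ideal_times smult max_ideal"
    unfolding ideal_times_def using r2 by (intro module.span_base[OF M]) blast
  then have "- smult (constA (1/c) * r) m \<in> ideal_times smult max_ideal"
    unfolding ideal_times_def by (rule module.span_neg[OF M])
  then show ?thesis using eq by simp
qed



lemma evI_gactA:
  "evI (gactA g p) = ev (\<lambda>c. c) (\<lambda>v. evI (case Rep_sym2 v of (i, j) \<Rightarrow> gvar g i j)) p"
proof -
  have "evI (gactA g p) = (\<Sum>\<mu>\<in>Poly_Mapping.keys p. Poly_Mapping.lookup p \<mu> *
      (\<Prod>v\<in>Poly_Mapping.keys \<mu>. evI (case Rep_sym2 v of (i, j) \<Rightarrow> gvar g i j) ^ Poly_Mapping.lookup \<mu> v))"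
    unfolding gactA_def evI_def
    by (simp add: ev_sum[OF hom_id] ev_mult[OF hom_id] ev_constA[OF hom_id] ev_prod[OF hom_id]
      ev_power[OF hom_id])
  then show ?thesis by (simp add: ev_def mon_def)
qed

lemma evI_xvar: "evI (xvar k l) = (if k = l then 1 else 0)"
proof -
  have "Rep_sym2 (Abs_sym2 (min k l, max k l)) = (min k l, max k l)"
    by (rule Abs_sym2_inverse) auto
  then show ?thesis
    by (auto simp: evI_def xvar_def ev_single[OF hom_id] mon_single Ipt_def)
qed

lemma evI_gvar:
  assumes cf: "\<And>k i. g k i \<noteq> 0 \<Longrightarrow> k \<le> i"
  shows "evI (gvar g i j) = (\<Sum>k\<le>i. g k i * g k j)"
proof -
  let ?A = "{(k, l). g k i * g l j \<noteq> 0}"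
  have sub: "?A \<subseteq> {..i} \<times> {..j}" using cf by fastforce
  have "evI (gvar g i j) = (\<Sum>(k, l)\<in>?A. g k i * g l j * (if k = l then 1 else 0))"
    unfolding gvar_def evI_def
    by (simp add: ev_sum[OF hom_id] ev_mult[OF hom_id] ev_constA[OF hom_id] evI_xvar[unfolded evI_def]
        case_prod_beta)
  also have "\<dots> = (\<Sum>(k, l)\<in>{..i} \<times> {..j}. g k i * g l j * (if k = l then 1 else 0))"
    by (rule sum.mono_neutral_left) (use sub in auto)
  also have "\<dots> = (\<Sum>k\<le>i. \<Sum>l\<le>j. g k i * g l j * (if k = l then 1 else 0))"
    by (simp add: sum.cartesian_product)
  also have "\<dots> = (\<Sum>k\<le>i. if k \<le> j then g k i * g k j else 0)"
    by (intro sum.cong refl) (simp add: if_distrib sum.delta cong: if_cong)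
  also have "\<dots> = (\<Sum>k\<le>i. g k i * g k j)"
    by (intro sum.cong refl) (use cf in force)
  finally show ?thesis .
qed

lemma poly_ev_pC: "poly (ev (\<lambda>c. [:c:]) Q p) t = ev (\<lambda>c. c) (\<lambda>v. poly (Q v) t) p"
  by (simp add: ev_def mon_def poly_sum poly_prod)



definition lead1 :: "complex poly \<Rightarrow> nat \<Rightarrow> bool" where
  "lead1 p d \<longleftrightarrow> degree p = d \<and> lead_coeff p = 1"

lemma lead1_monom_plus: "degree q < d \<Longrightarrow> lead1 (monom 1 d + q) d"
proof -
  assume q: "degree q < d"
  have dm: "degree (monom (1::complex) d) = d" by (simp add: degree_monom_eq)
  have "degree (monom 1 d + q) = d" using q dm by (simp add: degree_add_eq_left)
  moreover have "coeff (monom 1 d + q) d = 1" using q by (simp add: coeff_eq_0)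
  ultimately show ?thesis by (simp add: lead1_def)
qed

lemma lead1_monom: "lead1 (monom 1 d) d"
  by (simp add: lead1_def degree_monom_eq)

lemma lead1_add: "lead1 p d \<Longrightarrow> degree q < d \<Longrightarrow> lead1 (p + q) d"
proof -
  assume p: "lead1 p d" and q: "degree q < d"
  have c: "coeff p d = 1" using p by (auto simp: lead1_def)
  have "degree (p + q) = d" using p q by (simp add: lead1_def degree_add_eq_left)
  moreover have "coeff (p + q) d = 1" using c q by (simp add: coeff_eq_0)
  ultimately show ?thesis by (simp add: lead1_def)
qed

lemma lead1_mult: "lead1 p a \<Longrightarrow> lead1 q b \<Longrightarrow> lead1 (p * q) (a + b)"
proof -
  assume p: "lead1 p a" and q: "lead1 q b"
  then have "p \<noteq> 0" "q \<noteq> 0" by (auto simp: lead1_def)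
  then show ?thesis using p q lead_coeff_mult[of p q] by (auto simp: lead1_def degree_mult_eq)
qed

lemma lead1_one: "lead1 1 0"
  by (simp add: lead1_def)

lemma lead1_power: "lead1 p d \<Longrightarrow> lead1 (p ^ k) (k * d)"
  by (induction k) (auto simp: lead1_one dest: lead1_mult)

lemma lead1_prod: "finite A \<Longrightarrow> (\<And>a. a \<in> A \<Longrightarrow> lead1 (f a) (d a)) \<Longrightarrow> lead1 (prod f A) (sum d A)"
  by (induction A rule: finite_induct) (auto simp: lead1_one intro: lead1_mult)

definition idx :: "nat \<Rightarrow> nat \<Rightarrow> nat \<Rightarrow> nat" where
  "idx n i j = i * n + j + 1"
definition bexp :: "nat \<Rightarrow> nat \<Rightarrow> nat \<Rightarrow> nat" where
  "bexp n B i = B ^ idx n i i div 2"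
definition bb :: "nat \<Rightarrow> nat \<Rightarrow> nat \<Rightarrow> nat \<Rightarrow> nat" where
  "bb n B k i = B ^ idx n k i - bexp n B k"
definition Gp :: "nat \<Rightarrow> nat \<Rightarrow> nat \<Rightarrow> nat \<Rightarrow> complex poly" where
  "Gp n B k i = (if k = i then (if i < n then monom 1 (bexp n B i) else 1)
      else if k < i \<and> i < n then monom 1 (bb n B k i) - 1 else 0)"
definition Qp :: "nat \<Rightarrow> nat \<Rightarrow> nat \<Rightarrow> nat \<Rightarrow> complex poly" where
  "Qp n B i j = (\<Sum>k\<le>i. Gp n B k i * Gp n B k j)"
definition Qv :: "nat \<Rightarrow> nat \<Rightarrow> sym2 \<Rightarrow> complex poly" where
  "Qv n B v = (case Rep_sym2 v of (i, j) \<Rightarrow> Qp n B i j)"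

lemma Gp_zero: "k > i \<Longrightarrow> Gp n B k i = 0"
  by (simp add: Gp_def)

lemma bexp_pos: "B \<ge> 2 \<Longrightarrow> bexp n B i \<ge> 1"
proof -
  assume B: "B \<ge> 2"
  have "B ^ idx n i i \<ge> B ^ 1" using B by (intro power_increasing) (auto simp: idx_def)
  then show ?thesis using B by (simp add: bexp_def)
qed

lemma bexp_twice: "B \<ge> 2 \<Longrightarrow> even B \<Longrightarrow> 2 * bexp n B i = B ^ idx n i i"
proof -
  assume "even B" "B \<ge> 2"
  then have "even (B ^ idx n i i)" by (simp add: idx_def)
  then show ?thesis by (simp add: bexp_def)
qed

lemma bexp_lt: "B \<ge> 2 \<Longrightarrow> bexp n B i < B ^ idx n i i"
proof -
  assume B: "B \<ge> 2"
  then have "B ^ idx n i i > 0" by simp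
  then show ?thesis by (simp add: bexp_def)
qed

lemma idx_mono: "i \<le> j \<Longrightarrow> idx n k i \<le> idx n k j"
  by (simp add: idx_def)

lemma degree_rest:
  assumes B: "B \<ge> 2" and kij: "k < i" "i \<le> j" "j < n"
  shows "degree (Gp n B k i * Gp n B k j) < B ^ idx n i j"
proof -
  have kj: "k < j" using kij by simp
  have d1: "degree (Gp n B k i) \<le> bb n B k i" using kij
    by (simp add: Gp_def) (metis degree_diff_le degree_1 degree_monom_le le0)
  have d2: "degree (Gp n B k j) \<le> bb n B k j" using kij kj
    by (simp add: Gp_def) (metis degree_diff_le degree_1 degree_monom_le le0)
  have e1: "idx n k i \<le> i * n" "idx n k j \<le> i * n"
  proof -
    have "(k + 1) * n \<le> i * n" using kij by (intro mult_le_mono1) simp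
    then show "idx n k i \<le> i * n" "idx n k j \<le> i * n" using kij by (auto simp: idx_def)
  qed
  have "bb n B k i < B ^ (i * n)"
  proof -
    have "bb n B k i < B ^ idx n k i" using bexp_pos[OF B, of n k] B by (simp add: bb_def)
    also have "\<dots> \<le> B ^ (i * n)" using B e1 by (intro power_increasing) auto
    finally show ?thesis .
  qed
  moreover have "bb n B k j < B ^ (i * n)"
  proof -
    have "bb n B k j < B ^ idx n k j" using bexp_pos[OF B, of n k] B by (simp add: bb_def)
    also have "\<dots> \<le> B ^ (i * n)" using B e1 by (intro power_increasing) auto
    finally show ?thesis .
  qed
  ultimately have "bb n B k i + bb n B k j < 2 * B ^ (i * n)" by simp
  also have "\<dots> \<le> B * B ^ (i * n)" using B by simp
  also have "\<dots> = B ^ (i * n + 1)" by simp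
  also have "\<dots> \<le> B ^ idx n i j" using B by (intro power_increasing) (auto simp: idx_def)
  finally have "bb n B k i + bb n B k j < B ^ idx n i j" .
  moreover have "degree (Gp n B k i * Gp n B k j) \<le> bb n B k i + bb n B k j"
    using d1 d2 degree_mult_le[of "Gp n B k i" "Gp n B k j"] by simp
  ultimately show ?thesis by simp
qed

lemma lead1_Qp:
  assumes B: "B \<ge> 2" "even B" and ij: "i \<le> j" "j < n"
  shows "lead1 (Qp n B i j) (B ^ idx n i j)"
proof -
  have split: "Qp n B i j = Gp n B i i * Gp n B i j + (\<Sum>k<i. Gp n B k i * Gp n B k j)"
    unfolding Qp_def by (simp add: lessThan_Suc_atMost[symmetric])
  have rest: "degree (\<Sum>k<i. Gp n B k i * Gp n B k j) < B ^ idx n i j"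
  proof -
    have "B ^ idx n i j > 0" using B by simp
    then obtain D where D: "B ^ idx n i j = Suc D" by (cases "B ^ idx n i j") auto
    have "degree (\<Sum>k<i. Gp n B k i * Gp n B k j) \<le> D"
      by (rule degree_sum_le) (use degree_rest[OF B(1) _ ij] D in \<open>force\<close>)+
    then show ?thesis using D by simp
  qed
  have main: "lead1 (Gp n B i i * Gp n B i j) (B ^ idx n i j)"
  proof (cases "i = j")
    case True
    have "Gp n B i i * Gp n B i j = monom 1 (2 * bexp n B i)"
      using True ij by (simp add: Gp_def mult_monom mult_2)
    then show ?thesis using True bexp_twice[OF B(1) B(2)] lead1_monom by metis
  next
    case False
    have "B ^ idx n i i \<le> B ^ idx n i j" using B ij by (intro power_increasing) (auto simp: idx_def)
    then have bl: "bexp n B i \<le> B ^ idx n i j"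
      using bexp_lt[OF B(1), of n i] by linarith
    have "Gp n B i i * Gp n B i j = monom 1 (bexp n B i) * (monom 1 (bb n B i j) - 1)"
      using False ij by (simp add: Gp_def)
    also have "\<dots> = monom 1 (B ^ idx n i j) + (- monom 1 (bexp n B i))"
      using bl by (simp add: algebra_simps mult_monom bb_def)
    finally have eq: "Gp n B i i * Gp n B i j = monom 1 (B ^ idx n i j) + (- monom 1 (bexp n B i))" .
    have "bexp n B i < B ^ idx n i i" by (rule bexp_lt[OF B(1)])
    also have "\<dots> \<le> B ^ idx n i j" using B ij False by (intro power_increasing) (auto simp: idx_def)
    finally have "degree (- monom (1::complex) (bexp n B i)) < B ^ idx n i j"
      by (simp add: degree_monom_eq)
    then show ?thesis using eq lead1_monom_plus by metis
  qed
  show ?thesis using split main rest lead1_add by metis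
qed



definition Vn :: "nat \<Rightarrow> sym2 set" where
  "Vn n = {v. snd (Rep_sym2 v) < n}"
definition idxv :: "nat \<Rightarrow> sym2 \<Rightarrow> nat" where
  "idxv n v = idx n (fst (Rep_sym2 v)) (snd (Rep_sym2 v))"
definition Dg :: "nat \<Rightarrow> nat \<Rightarrow> (sym2 \<Rightarrow>\<^sub>0 nat) \<Rightarrow> nat" where
  "Dg n B \<mu> = (\<Sum>v\<in>Poly_Mapping.keys \<mu>. Poly_Mapping.lookup \<mu> v * B ^ idxv n v)"
definition Tm :: "nat \<Rightarrow> nat \<Rightarrow> (sym2 \<Rightarrow>\<^sub>0 nat) \<Rightarrow> complex poly" where
  "Tm n B \<mu> = (\<Prod>v\<in>Poly_Mapping.keys \<mu>. Qv n B v ^ Poly_Mapping.lookup \<mu> v)"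

lemma Rep_le: "fst (Rep_sym2 v) \<le> snd (Rep_sym2 v)"
  using Rep_sym2[of v] by auto

lemma lead1_Tm:
  assumes B: "B \<ge> 2" "even B" and K: "Poly_Mapping.keys \<mu> \<subseteq> Vn n"
  shows "lead1 (Tm n B \<mu>) (Dg n B \<mu>)"
  unfolding Tm_def Dg_def
proof (rule lead1_prod)
  fix v assume v: "v \<in> Poly_Mapping.keys \<mu>"
  obtain i j where R: "Rep_sym2 v = (i, j)" by (cases "Rep_sym2 v") auto
  have "i \<le> j" "j < n" using R Rep_le[of v] K v by (auto simp: Vn_def)
  then have "lead1 (Qv n B v) (B ^ idxv n v)"
    using lead1_Qp[OF B] R by (simp add: Qv_def idxv_def)
  then show "lead1 (Qv n B v ^ Poly_Mapping.lookup \<mu> v) (Poly_Mapping.lookup \<mu> v * B ^ idxv n v)"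
    by (rule lead1_power)
qed simp


lemma ev_pC_expand:
  "ev (\<lambda>c. [:c:]) (Qv n B) u = (\<Sum>\<mu>\<in>Poly_Mapping.keys u. smult (Poly_Mapping.lookup u \<mu>) (Tm n B \<mu>))"
  by (simp add: ev_def mon_def Tm_def)


lemma digits:
  "(\<forall>k<R. f k < B) \<Longrightarrow> (\<forall>k<R. g k < B) \<Longrightarrow> (\<Sum>k<R. f k * B ^ k) = (\<Sum>k<R. g k * B ^ k)
    \<Longrightarrow> \<forall>k<R. f k = (g k :: nat)"
proof (induction R arbitrary: f g)
  case 0
  then show ?case by simp
next
  case (Suc R)
  have ex: "(\<Sum>k<Suc R. h k * B ^ k) = h 0 + B * (\<Sum>k<R. h (Suc k) * B ^ k)" for h :: "nat \<Rightarrow> nat"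
    by (subst sum.lessThan_Suc_shift) (simp add: sum_distrib_left ac_simps)
  have f0: "f 0 < B" "g 0 < B" using Suc.prems by auto
  have E: "f 0 + B * (\<Sum>k<R. f (Suc k) * B ^ k) = g 0 + B * (\<Sum>k<R. g (Suc k) * B ^ k)"
    using Suc.prems(3) by (simp only: ex)
  then have "(f 0 + B * (\<Sum>k<R. f (Suc k) * B ^ k)) mod B = (g 0 + B * (\<Sum>k<R. g (Suc k) * B ^ k)) mod B"
    by simp
  then have e0: "f 0 = g 0" using f0 by simp
  have "B > 0" using f0 by simp
  then have eqs: "(\<Sum>k<R. f (Suc k) * B ^ k) = (\<Sum>k<R. g (Suc k) * B ^ k)" using E e0 by simp
  have b1: "\<forall>k<R. f (Suc k) < B" using Suc.prems(1) by simp
  have b2: "\<forall>k<R. g (Suc k) < B" using Suc.prems(2) by simp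
  have "\<forall>k<R. f (Suc k) = g (Suc k)"
    using Suc.IH[of "\<lambda>k. f (Suc k)" "\<lambda>k. g (Suc k)", OF b1 b2 eqs] .
  then show ?case using e0 by (auto simp: less_Suc_eq_0_disj)
qed


lemma finite_Vn: "finite (Vn n)"
proof -
  have "Vn n \<subseteq> Rep_sym2 -` ({..n} \<times> {..<n})"
  proof
    fix v assume "v \<in> Vn n"
    then show "v \<in> Rep_sym2 -` ({..n} \<times> {..<n})" using Rep_le[of v]
      by (cases "Rep_sym2 v") (auto simp: Vn_def)
  qed
  moreover have "inj Rep_sym2" by (rule injI) (simp add: Rep_sym2_inject)
  moreover have "finite (Rep_sym2 -` ({..n} \<times> {..<n}))"
    by (rule finite_vimageI) (auto intro: \<open>inj Rep_sym2\<close>)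
  ultimately show ?thesis using finite_subset by blast
qed

lemma inj_idxv: "inj_on (idxv n) (Vn n)"
proof (rule inj_onI)
  fix v w assume v: "v \<in> Vn n" and w: "w \<in> Vn n" and e: "idxv n v = idxv n w"
  obtain a b where R1: "Rep_sym2 v = (a, b)" by (cases "Rep_sym2 v") auto
  obtain c d where R2: "Rep_sym2 w = (c, d)" by (cases "Rep_sym2 w") auto
  have bd: "b < n" "d < n" using v w R1 R2 by (auto simp: Vn_def)
  have e2: "a * n + b = c * n + d" using e R1 R2 by (simp add: idxv_def idx_def)
  then have "(a * n + b) mod n = (c * n + d) mod n" by simp
  then have "b = d" using bd by simp
  moreover have "(a * n + b) div n = (c * n + d) div n" using e2 by simp
  then have "a = c" using bd by simp
  ultimately have "Rep_sym2 v = Rep_sym2 w" using R1 R2 by simp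
  then show "v = w" by (simp add: Rep_sym2_inject)
qed

lemma idxv_bound: "v \<in> Vn n \<Longrightarrow> idxv n v < n * n + n + 1"
proof -
  assume v: "v \<in> Vn n"
  obtain a b where R: "Rep_sym2 v = (a, b)" by (cases "Rep_sym2 v") auto
  have "a \<le> b" "b < n" using R Rep_le[of v] v by (auto simp: Vn_def)
  then have "a * n \<le> n * n" by (simp add: mult_le_mono1)
  then have "a * n + b < n * n + n" using \<open>b < n\<close> by linarith
  then show ?thesis using R by (simp add: idxv_def idx_def)
qed


lemma Dg_alt:
  assumes K: "Poly_Mapping.keys \<mu> \<subseteq> Vn n"
  shows "Dg n B \<mu> = (\<Sum>k<n * n + n + 1. (if k \<in> idxv n ` Vn n then Poly_Mapping.lookup \<mu> (inv_into (Vn n) (idxv n) k) else 0) * B ^ k)"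
    (is "_ = (\<Sum>k<?R. ?h k * B ^ k)")
proof -
  have "Dg n B \<mu> = (\<Sum>v\<in>Vn n. Poly_Mapping.lookup \<mu> v * B ^ idxv n v)"
    unfolding Dg_def by (rule sum.mono_neutral_left) (use K finite_Vn in \<open>auto simp: in_keys_iff\<close>)
  also have "\<dots> = (\<Sum>v\<in>Vn n. ?h (idxv n v) * B ^ idxv n v)"
    by (intro sum.cong refl) (simp add: inv_into_f_f[OF inj_idxv])
  also have "\<dots> = (\<Sum>k\<in>idxv n ` Vn n. ?h k * B ^ k)"
    by (subst sum.reindex[OF inj_idxv]) simp
  also have "\<dots> = (\<Sum>k<?R. ?h k * B ^ k)"
    by (rule sum.mono_neutral_left) (use idxv_bound in auto)
  finally show ?thesis .
qed

lemma Dg_inj: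
  assumes K1: "Poly_Mapping.keys \<mu> \<subseteq> Vn n" and K2: "Poly_Mapping.keys \<nu> \<subseteq> Vn n"
    and b1: "\<And>v. Poly_Mapping.lookup \<mu> v < B" and b2: "\<And>v. Poly_Mapping.lookup \<nu> v < B"
    and e: "Dg n B \<mu> = Dg n B \<nu>"
  shows "\<mu> = \<nu>"
proof (rule poly_mapping_eqI)
  fix v
  let ?R = "n * n + n + 1"
  let ?h = "\<lambda>\<mu> k. (if k \<in> idxv n ` Vn n then Poly_Mapping.lookup \<mu> (inv_into (Vn n) (idxv n) k) else 0)"
  have "B > 0" using b1[of v] by simp
  have "\<forall>k<?R. ?h \<mu> k = ?h \<nu> k"
    by (rule digits) (use e Dg_alt[OF K1, of B] Dg_alt[OF K2, of B] b1 b2 \<open>B > 0\<close> in auto)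
  show "Poly_Mapping.lookup \<mu> v = Poly_Mapping.lookup \<nu> v"
  proof (cases "v \<in> Vn n")
    case True
    then have "?h \<mu> (idxv n v) = ?h \<nu> (idxv n v)"
      using \<open>\<forall>k<?R. ?h \<mu> k = ?h \<nu> k\<close> idxv_bound by blast
    then show ?thesis using True by (simp add: inv_into_f_f[OF inj_idxv])
  next
    case False
    then show ?thesis by (metis False K1 K2 in_keys_iff subsetD)
  qed
qed


lemma P_nonzero:
  assumes B: "B \<ge> 2" "even B" and u: "u \<noteq> 0"
    and K: "\<And>\<mu>. \<mu> \<in> Poly_Mapping.keys u \<Longrightarrow> Poly_Mapping.keys \<mu> \<subseteq> Vn n"
    and bnd: "\<And>\<mu> v. \<mu> \<in> Poly_Mapping.keys u \<Longrightarrow> Poly_Mapping.lookup \<mu> v < B"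
  shows "ev (\<lambda>c. [:c:]) (Qv n B) u \<noteq> 0"
proof -
  let ?K = "Poly_Mapping.keys u"
  have Kne: "?K \<noteq> {}" using u by simp
  define d0 where "d0 = Max (Dg n B ` ?K)"
  have "d0 \<in> Dg n B ` ?K" unfolding d0_def using Kne by (intro Max_in) auto
  then obtain \<mu>0 where m0: "\<mu>0 \<in> ?K" "Dg n B \<mu>0 = d0" by auto
  have lt: "Dg n B \<mu> < d0" if "\<mu> \<in> ?K" "\<mu> \<noteq> \<mu>0" for \<mu>
  proof -
    have "Dg n B \<mu> \<le> d0" unfolding d0_def using that by (intro Max_ge) auto
    moreover have "Dg n B \<mu> \<noteq> d0" using Dg_inj[OF K[OF that(1)] K[OF m0(1)] bnd[OF that(1)] bnd[OF m0(1)]] m0 that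
      by auto
    ultimately show ?thesis by simp
  qed
  have "coeff (ev (\<lambda>c. [:c:]) (Qv n B) u) d0 = (\<Sum>\<mu>\<in>?K. Poly_Mapping.lookup u \<mu> * coeff (Tm n B \<mu>) d0)"
    by (simp add: ev_pC_expand coeff_sum)
  also have "\<dots> = Poly_Mapping.lookup u \<mu>0 * coeff (Tm n B \<mu>0) d0"
  proof -
    have z: "(\<Sum>\<mu>\<in>?K - {\<mu>0}. Poly_Mapping.lookup u \<mu> * coeff (Tm n B \<mu>) d0) = 0"
    proof (rule sum.neutral, rule ballI)
      fix \<mu> assume "\<mu> \<in> ?K - {\<mu>0}"
      then have "degree (Tm n B \<mu>) < d0" using lt lead1_Tm[OF B K] by (auto simp: lead1_def)
      then show "Poly_Mapping.lookup u \<mu> * coeff (Tm n B \<mu>) d0 = 0" by (simp add: coeff_eq_0)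
    qed
    show ?thesis using sum.remove[OF finite_keys m0(1), of "\<lambda>\<mu>. Poly_Mapping.lookup u \<mu> * coeff (Tm n B \<mu>) d0"] z by simp
  qed
  also have "\<dots> = Poly_Mapping.lookup u \<mu>0"
    using lead1_Tm[OF B K[OF m0(1)]] m0 by (auto simp: lead1_def)
  also have "\<dots> \<noteq> 0" using m0 by (simp add: in_keys_iff)
  finally show ?thesis by auto
qed



lemma upper_rinv:
  fixes g :: "nat \<Rightarrow> nat \<Rightarrow> complex"
  shows "(\<forall>i<n. \<forall>j<i. g i j = 0) \<Longrightarrow> (\<forall>i<n. g i i \<noteq> 0) \<Longrightarrow>
    \<exists>h. \<forall>i<n. \<forall>j<n. (\<Sum>k<n. g i k * h k j) = (if i = j then 1 else 0)"
proof (induction n)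
  case 0
  then show ?case by simp
next
  case (Suc n)
  then obtain h' where h': "\<forall>i<n. \<forall>j<n. (\<Sum>k<n. g i k * h' k j) = (if i = j then 1 else 0)"
    by auto
  define d where "d = g n n"
  have d: "d \<noteq> 0" using Suc.prems by (simp add: d_def)
  define h where "h i j = (if j < n then (if i < n then h' i j else 0)
      else (if i < n then - (\<Sum>l<n. h' i l * g l n) / d else 1 / d))" for i j
  have low: "g n k = 0" if "k < n" for k using Suc.prems that by auto
  show ?case
  proof (intro exI allI impI)
    fix i j assume i: "i < Suc n" and j: "j < Suc n"
    have S: "(\<Sum>k<Suc n. g i k * h k j) = (\<Sum>k<n. g i k * h k j) + g i n * h n j" by simp
    show "(\<Sum>k<Suc n. g i k * h k j) = (if i = j then 1 else 0)"
    proof (cases "j < n")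
      case True
      then have hn: "h n j = 0" by (simp add: h_def)
      show ?thesis
      proof (cases "i < n")
        case True
        then show ?thesis using h' \<open>j < n\<close> S hn by (simp add: h_def)
      next
        case False
        then have "i = n" using i by simp
        then show ?thesis using S hn \<open>j < n\<close> low by simp
      qed
    next
      case False
      then have jn: "j = n" using j by simp
      show ?thesis
      proof (cases "i < n")
        case True
        have "(\<Sum>k<n. g i k * h k j) = - (\<Sum>k<n. g i k * (\<Sum>l<n. h' k l * g l n)) / d"
        proof -
          have "(\<Sum>k<n. g i k * h k j) = (\<Sum>k<n. - (g i k * (\<Sum>l<n. h' k l * g l n)) / d)"
            using jn by (intro sum.cong refl) (simp add: h_def)
          also have "\<dots> = - (\<Sum>k<n. g i k * (\<Sum>l<n. h' k l * g l n)) / d"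
            by (simp add: sum_divide_distrib[symmetric] sum_negf)
          finally show ?thesis .
        qed
        also have "(\<Sum>k<n. g i k * (\<Sum>l<n. h' k l * g l n)) = (\<Sum>l<n. (\<Sum>k<n. g i k * h' k l) * g l n)"
        proof -
          have "(\<Sum>k<n. g i k * (\<Sum>l<n. h' k l * g l n)) = (\<Sum>k<n. \<Sum>l<n. g i k * h' k l * g l n)"
            by (simp add: sum_distrib_left mult.assoc)
          also have "\<dots> = (\<Sum>l<n. \<Sum>k<n. g i k * h' k l * g l n)" by (rule sum.swap)
          also have "\<dots> = (\<Sum>l<n. (\<Sum>k<n. g i k * h' k l) * g l n)" by (simp add: sum_distrib_right)
          finally show ?thesis .
        qed
        also have "\<dots> = (\<Sum>l<n. (if i = l then 1 else 0) * g l n)"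
          using h' True by simp
        also have "\<dots> = (\<Sum>l<n. if i = l then g l n else 0)" by (intro sum.cong refl) simp
        also have "\<dots> = g i n" using True by (simp add: sum.delta)
        finally have "(\<Sum>k<n. g i k * h k j) = - g i n / d" .
        moreover have "h n j = 1 / d" using jn by (simp add: h_def)
        ultimately show ?thesis using S True jn by simp
      next
        case False
        then have "i = n" using i by simp
        then show ?thesis using S jn low d by (simp add: h_def d_def)
      qed
    qed
  qed
qed

definition gt :: "nat \<Rightarrow> nat \<Rightarrow> complex \<Rightarrow> nat \<Rightarrow> nat \<Rightarrow> complex" where
  "gt n B t k i = poly (Gp n B k i) t"

lemma gt_cf: "gt n B t k i \<noteq> 0 \<Longrightarrow> k \<le> i"
  using Gp_zero[of i k n B] by (force simp: gt_def)

lemma gt_id_outside: "id_outside n (gt n B t)"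
  unfolding id_outside_def gt_def Gp_def by auto

lemma gt_GLinf:
  assumes t: "t \<noteq> 0"
  shows "gt n B t \<in> GLinf"
proof -
  have "\<forall>i<n. \<forall>j<i. gt n B t i j = 0" using gt_cf by force
  moreover have "\<forall>i<n. gt n B t i i \<noteq> 0" using t by (simp add: gt_def Gp_def poly_monom)
  ultimately obtain h where h: "\<forall>i<n. \<forall>j<n. (\<Sum>k<n. gt n B t i k * h k j) = (if i = j then 1 else 0)"
    using upper_rinv by blast
  define h2 where "h2 i j = (if i < n \<and> j < n then h i j else (if i = j then 1 else 0))" for i j
  have "id_outside n h2" by (auto simp: id_outside_def h2_def)
  moreover have "\<forall>i<n. \<forall>j<n. (\<Sum>k<n. gt n B t i k * h2 k j) = (if i = j then 1 else 0)"
    using h by (simp add: h2_def)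
  ultimately show ?thesis unfolding GLinf_def using gt_id_outside by blast
qed

lemma evI_gactA_gt:
  "evI (gactA (gt n B t) u) = poly (ev (\<lambda>c. [:c:]) (Qv n B) u) t"
proof -
  have "evI (case Rep_sym2 v of (i, j) \<Rightarrow> gvar (gt n B t) i j) = poly (Qv n B v) t" for v
  proof -
    obtain i j where R: "Rep_sym2 v = (i, j)" by (cases "Rep_sym2 v") auto
    have "evI (gvar (gt n B t) i j) = (\<Sum>k\<le>i. gt n B t k i * gt n B t k j)"
      by (rule evI_gvar) (rule gt_cf)
    also have "\<dots> = poly (Qp n B i j) t" by (simp add: Qp_def gt_def poly_sum)
    finally show ?thesis using R by (simp add: Qv_def)
  qed
  then show ?thesis by (simp add: evI_gactA poly_ev_pC)
qed



lemma lookup_tscale: "Poly_Mapping.lookup (tscale c v) k = c * Poly_Mapping.lookup v k"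
  by (simp add: tscale_def map.rep_eq when_def)

lemma tcoef_nz_le:
  assumes cf: "\<And>k i. g k i \<noteq> 0 \<Longrightarrow> k \<le> i"
    and nz: "tcoef g u w \<noteq> 0" and k: "k < length w"
  shows "u ! k \<le> w ! k"
proof -
  have "g (u ! k) (w ! k) \<noteq> 0" using nz k by (auto simp: tcoef_def)
  then show ?thesis by (rule cf)
qed

lemma finite_U:
  assumes cf: "\<And>k i. g k i \<noteq> 0 \<Longrightarrow> k \<le> i"
  shows "finite {u. length u = length w \<and> tcoef g u w \<noteq> 0}"
proof (rule finite_subset)
  show "{u. length u = length w \<and> tcoef g u w \<noteq> 0} \<subseteq> {xs. set xs \<subseteq> {..sum_list w} \<and> length xs = length w}"
  proof
    fix u assume "u \<in> {u. length u = length w \<and> tcoef g u w \<noteq> 0}"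
    then have l: "length u = length w" and nz: "tcoef g u w \<noteq> 0" by auto
    have "x \<le> sum_list w" if x: "x \<in> set u" for x
    proof -
      obtain k where k: "k < length u" "u ! k = x" using x by (auto simp: in_set_conv_nth)
      have kw: "k < length w" using k l by simp
      have "u ! k \<le> w ! k" by (rule tcoef_nz_le[OF cf nz kw])
      also have "w ! k \<le> sum_list w" using kw
        by (induction w arbitrary: k) (auto simp: nth_Cons split: nat.splits, fastforce)
      finally show ?thesis using k by simp
    qed
    then show "u \<in> {xs. set xs \<subseteq> {..sum_list w} \<and> length xs = length w}" using l by auto
  qed
qed (rule finite_lists_length_eq, simp)

lemma lookup_tact:
  fixes v :: "('t \<times> nat list) \<Rightarrow>\<^sub>0 complex" and s :: 't
  assumes cf: "\<And>k i. g k i \<noteq> 0 \<Longrightarrow> k \<le> i"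
  shows "Poly_Mapping.lookup (tact g v) (s, u) =
    (\<Sum>p\<in>{p \<in> Poly_Mapping.keys v. fst p = s \<and> length (snd p) = length u}.
        Poly_Mapping.lookup v p * tcoef g u (snd p))"
proof -
  have "Poly_Mapping.lookup (tact g v) (s, u) =
      (\<Sum>(p::'t \<times> nat list)\<in>Poly_Mapping.keys v. (\<Sum>u'\<in>{u'. length u' = length (snd p) \<and> tcoef g u' (snd p) \<noteq> 0}.
          (Poly_Mapping.lookup v p * tcoef g u' (snd p) when (fst p, u') = (s, u))))"
    unfolding tact_def by (simp add: lookup_sum lookup_single case_prod_beta)
  also have "\<dots> = (\<Sum>p\<in>Poly_Mapping.keys v. (if fst p = s \<and> length (snd p) = length u then
       Poly_Mapping.lookup v p * tcoef g u (snd p) else 0))"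
  proof (intro sum.cong refl)
    fix p :: "'t \<times> nat list"
    let ?U = "{u'. length u' = length (snd p) \<and> tcoef g u' (snd p) \<noteq> 0}"
    have "(\<Sum>u'\<in>?U. (Poly_Mapping.lookup v p * tcoef g u' (snd p) when (fst p, u') = (s, u)))
        = (\<Sum>u'\<in>?U. if u' = u then (if fst p = s then Poly_Mapping.lookup v p * tcoef g u (snd p) else 0) else 0)"
      by (intro sum.cong refl) (auto simp: when_def)
    also have "\<dots> = (if u \<in> ?U then (if fst p = s then Poly_Mapping.lookup v p * tcoef g u (snd p) else 0) else 0)"
      using finite_U[OF cf] by (simp add: sum.delta')
    also have "\<dots> = (if fst p = s \<and> length (snd p) = length u then
       Poly_Mapping.lookup v p * tcoef g u (snd p) else 0)"
      by auto
    finally show "(\<Sum>u'\<in>?U. (Poly_Mapping.lookup v p * tcoef g u' (snd p) when (fst p, u') = (s, u))) = \<dots>" .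
  qed
  also have "\<dots> = (\<Sum>p\<in>{p \<in> Poly_Mapping.keys v. fst p = s \<and> length (snd p) = length u}.
        Poly_Mapping.lookup v p * tcoef g u (snd p))"
    by (simp add: sum.inter_filter)
  finally show ?thesis .
qed

lemma lagrange:
  fixes P :: "complex poly"
  assumes T: "finite T" "card T = Suc D" and deg: "degree P \<le> D"
  shows "poly P x = (\<Sum>a\<in>T. (\<Prod>b\<in>T - {a}. (x - b) / (a - b)) * poly P a)"
proof -
  define L where "L a = (\<Prod>b\<in>T - {a}. smult (1 / (a - b)) [:- b, 1:])" for a
  have pL: "poly (L a) y = (\<Prod>b\<in>T - {a}. (y - b) / (a - b))" for a y
    unfolding L_def poly_prod by (intro prod.cong refl) (auto simp: divide_simps)
  have dL: "degree (L a) \<le> D" if "a \<in> T" for a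
  proof -
    have "degree (L a) \<le> (\<Sum>b\<in>T - {a}. degree (smult (1 / (a - b)) [:- b, 1:]))"
      unfolding L_def using degree_prod_sum_le[OF finite_Diff[OF T(1), of "{a}"], of "\<lambda>b. smult (1 / (a - b)) [:- b, 1:]"]
      by (simp only: o_def)
    also have "\<dots> \<le> (\<Sum>b\<in>T - {a}. 1)"
    proof (intro sum_mono)
      fix b
      show "degree (smult (1 / (a - b)) [:- b, 1:]) \<le> 1"
        using degree_smult_le[of "1 / (a - b)" "[:- b, 1:]"] by simp
    qed
    also have "\<dots> = D" using T that by simp
    finally show ?thesis .
  qed
  have pLc: "poly (L a) c = (if a = c then 1 else 0)" if "a \<in> T" "c \<in> T" for a c
  proof (cases "a = c")
    case True
    have "(\<Prod>b\<in>T - {a}. (c - b) / (a - b)) = (\<Prod>b\<in>T - {a}. 1)"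
      using True by (intro prod.cong refl) auto
    then show ?thesis using True by (simp add: pL)
  next
    case False
    then have "c \<in> T - {a}" using that by simp
    then have "(\<Prod>b\<in>T - {a}. (c - b) / (a - b)) = 0"
      using T(1) by (intro prod_zero) (auto intro!: bexI[of _ c])
    then show ?thesis using False by (simp add: pL)
  qed
  define Q where "Q = (\<Sum>a\<in>T. smult (poly P a) (L a))"
  have "P = Q"
  proof (rule poly_eqI_degree[of T])
    fix c assume c: "c \<in> T"
    have "poly Q c = (\<Sum>a\<in>T. poly P a * (if a = c then 1 else 0))"
      unfolding Q_def by (simp add: poly_sum pLc c cong: sum.cong)
    also have "\<dots> = poly P c" using c T by (simp add: if_distrib sum.delta cong: if_cong)
    finally show "poly P c = poly Q c" by simp
  next
    show "degree P < card T" using deg T by simp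
  next
    have "degree Q \<le> D" unfolding Q_def
      by (rule degree_sum_le) (use T dL degree_smult_le le_trans in blast)+
    then show "degree Q < card T" using T by simp
  qed
  then have "poly P x = poly Q x" by simp
  also have "\<dots> = (\<Sum>a\<in>T. (\<Prod>b\<in>T - {a}. (x - b) / (a - b)) * poly P a)"
    unfolding Q_def by (simp add: poly_sum pL ac_simps)
  finally show ?thesis .
qed



lemma gt_one: "gt n B 1 k i = (if k = i then 1 else 0)"
  by (simp add: gt_def Gp_def poly_monom)

lemma tcoef_gt_one:
  assumes l: "length u = length w"
  shows "tcoef (gt n B 1) u w = (if u = w then 1 else 0)"
proof (cases "u = w")
  case True
  then show ?thesis by (simp add: tcoef_def gt_one)
next
  case False
  have "\<exists>k<length w. u ! k \<noteq> w ! k"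
  proof (rule ccontr)
    assume "\<not> (\<exists>k<length w. u ! k \<noteq> w ! k)"
    then have "u = w" using l by (intro nth_equalityI) auto
    then show False using False by simp
  qed
  then obtain k where k: "k < length w" "u ! k \<noteq> w ! k" by blast
  have "tcoef (gt n B 1) u w = 0" unfolding tcoef_def
    using k by (intro prod_zero) (auto simp: gt_one intro!: bexI[of _ k])
  then show ?thesis using False by simp
qed

lemma idx_le: "i < n \<Longrightarrow> j < n \<Longrightarrow> idx n i j \<le> n * n + n"
proof -
  assume "i < n" "j < n"
  then have "i * n \<le> n * n" by (simp add: mult_le_mono1)
  moreover have "j + 1 \<le> n" using \<open>j < n\<close> by simp
  ultimately have "i * n + j + 1 \<le> n * n + n" by linarith
  then show ?thesis by (simp add: idx_def)
qed

lemma deg_Gp: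
  assumes B: "B \<ge> 2"
  shows "degree (Gp n B k i) \<le> B ^ (n * n + n)"
proof -
  have "degree (Gp n B k i) \<le> (if k = i \<and> i < n then bexp n B i else if k < i \<and> i < n then bb n B k i else 0)"
    unfolding Gp_def
    by (auto simp: degree_monom_eq intro: order.trans[OF degree_diff_le])
  also have "\<dots> \<le> B ^ (n * n + n)"
  proof -
    have "bexp n B i \<le> B ^ (n * n + n)" if "i < n"
    proof -
      have "bexp n B i \<le> B ^ idx n i i" using bexp_lt[OF B, of n i] by simp
      also have "\<dots> \<le> B ^ (n * n + n)" using B idx_le[OF that that] by (intro power_increasing) auto
      finally show ?thesis .
    qed
    moreover have "bb n B k i \<le> B ^ (n * n + n)" if "k < i" "i < n"
    proof -
      have "bb n B k i \<le> B ^ idx n k i" by (simp add: bb_def)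
      also have "\<dots> \<le> B ^ (n * n + n)" using B idx_le[of k n i] that by (intro power_increasing) auto
      finally show ?thesis .
    qed
    ultimately show ?thesis by auto
  qed
  finally show ?thesis .
qed

definition PP :: "nat \<Rightarrow> nat \<Rightarrow> (('t \<times> nat list) \<Rightarrow>\<^sub>0 complex) \<Rightarrow> 't \<Rightarrow> nat list \<Rightarrow> complex poly" where
  "PP n B v s u = (\<Sum>p\<in>{p \<in> Poly_Mapping.keys v. fst p = s \<and> length (snd p) = length u}.
      smult (Poly_Mapping.lookup v p) (\<Prod>k<length u. Gp n B (u ! k) (snd p ! k)))"

lemma poly_PP: "poly (PP n B v s u) t = Poly_Mapping.lookup (tact (gt n B t) v) (s, u)"
proof -
  have "poly (PP n B v s u) t = (\<Sum>p\<in>{p \<in> Poly_Mapping.keys v. fst p = s \<and> length (snd p) = length u}.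
        Poly_Mapping.lookup v p * tcoef (gt n B t) u (snd p))"
    unfolding PP_def poly_sum by (intro sum.cong refl) (simp add: poly_prod tcoef_def gt_def)
  also have "\<dots> = Poly_Mapping.lookup (tact (gt n B t) v) (s, u)"
    by (rule lookup_tact[symmetric]) (rule gt_cf)
  finally show ?thesis .
qed

lemma poly_PP_one: "poly (PP n B v s u) 1 = Poly_Mapping.lookup v (s, u)"
proof -
  have "poly (PP n B v s u) 1 = (\<Sum>p\<in>{p \<in> Poly_Mapping.keys v. fst p = s \<and> length (snd p) = length u}.
        Poly_Mapping.lookup v p * tcoef (gt n B 1) u (snd p))"
    unfolding PP_def poly_sum by (intro sum.cong refl) (simp add: poly_prod tcoef_def gt_def)
  also have "\<dots> = (\<Sum>p\<in>{p \<in> Poly_Mapping.keys v. fst p = s \<and> length (snd p) = length u}.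
        if p = (s, u) then Poly_Mapping.lookup v p else 0)"
    by (intro sum.cong refl) (auto simp: tcoef_gt_one)
  also have "\<dots> = Poly_Mapping.lookup v (s, u)"
    by (simp add: sum.delta' in_keys_iff)
  finally show ?thesis .
qed

lemma degree_PP:
  assumes B: "B \<ge> 2"
  shows "degree (PP n B v s u) \<le> (\<Sum>p\<in>Poly_Mapping.keys v. length (snd p)) * B ^ (n * n + n)"
  unfolding PP_def
proof (rule degree_sum_le)
  fix p assume p: "p \<in> {p \<in> Poly_Mapping.keys v. fst p = s \<and> length (snd p) = length u}"
  have "degree (\<Prod>k<length u. Gp n B (u ! k) (snd p ! k)) \<le> (\<Sum>k<length u. degree (Gp n B (u ! k) (snd p ! k)))"
    using degree_prod_sum_le[of "{..<length u}" "\<lambda>k. Gp n B (u ! k) (snd p ! k)"] by (simp add: o_def)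
  also have "\<dots> \<le> (\<Sum>k<length u. B ^ (n * n + n))"
    by (intro sum_mono deg_Gp[OF B])
  also have "\<dots> = length (snd p) * B ^ (n * n + n)" using p by simp
  also have "\<dots> \<le> (\<Sum>p\<in>Poly_Mapping.keys v. length (snd p)) * B ^ (n * n + n)"
    using p by (intro mult_le_mono1 member_le_sum) auto
  finally show "degree (smult (Poly_Mapping.lookup v p) (\<Prod>k<length u. Gp n B (u ! k) (snd p ! k)))
     \<le> (\<Sum>p\<in>Poly_Mapping.keys v. length (snd p)) * B ^ (n * n + n)"
    using degree_smult_le le_trans by blast
qed simp

lemma interpolate_v:
  fixes v :: "('t \<times> nat list) \<Rightarrow>\<^sub>0 complex"
  assumes B: "B \<ge> 2" and T: "finite T" "card T = Suc ((\<Sum>p\<in>Poly_Mapping.keys v. length (snd p)) * B ^ (n * n + n))"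
  shows "v = (\<Sum>a\<in>T. tscale (\<Prod>b\<in>T - {a}. (1 - b) / (a - b)) (tact (gt n B a) v))"
proof (rule poly_mapping_eqI)
  fix k :: "'t \<times> nat list"
  obtain s u where k: "k = (s, u)" by (cases k)
  have "Poly_Mapping.lookup (\<Sum>a\<in>T. tscale (\<Prod>b\<in>T - {a}. (1 - b) / (a - b)) (tact (gt n B a) v)) k
      = (\<Sum>a\<in>T. (\<Prod>b\<in>T - {a}. (1 - b) / (a - b)) * poly (PP n B v s u) a)"
    by (simp add: lookup_sum lookup_tscale poly_PP k)
  also have "\<dots> = poly (PP n B v s u) 1"
    by (rule lagrange[symmetric, OF T degree_PP[OF B]])
  also have "\<dots> = Poly_Mapping.lookup v k" by (simp add: poly_PP_one k)
  finally show "Poly_Mapping.lookup v k = Poly_Mapping.lookup (\<Sum>a\<in>T. tscale (\<Prod>b\<in>T - {a}. (1 - b) / (a - b)) (tact (gt n B a) v)) k"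
    by simp
qed



theorem mainTheorem15:
  fixes smult :: "polyA \<Rightarrow> 'm::ab_group_add \<Rightarrow> 'm"
    and act :: "(nat \<Rightarrow> nat \<Rightarrow> complex) \<Rightarrow> 'm \<Rightarrow> 'm"
    and deg :: "'t \<Rightarrow> nat"
  assumes "module smult"
    and "compatible_GL_action smult act"
    and "polynomial_rep_via deg smult act"
    and "tensor_frac_zero smult"
  shows "ideal_times smult max_ideal = UNIV"
proof -
  note M = assms(1)
  let ?S = "ideal_times smult max_ideal"
  obtain N phi where Nsub: "N \<subseteq> tensum deg" and N0: "0 \<in> N" and Nadd: "\<forall>v\<in>N. \<forall>v'\<in>N. v + v' \<in> N"
    and Nsc: "\<forall>c. \<forall>v\<in>N. tscale c v \<in> N" and Nact: "\<forall>g\<in>GLinf. \<forall>v\<in>N. tact g v \<in> N"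
    and phiadd: "\<forall>v\<in>N. \<forall>v'\<in>N. phi (v + v') = phi v + phi v'"
    and phisc: "\<forall>c. \<forall>v\<in>N. phi (tscale c v) = smult (constA c) (phi v)"
    and phiact: "\<forall>g\<in>GLinf. \<forall>v\<in>N. phi (tact g v) = act g (phi v)"
    and phisurj: "phi ` N = (UNIV :: 'm set)"
    using assms(3) unfolding polynomial_rep_via_def by (elim exE conjE) (rule that; assumption)
  have actadd: "\<forall>g\<in>GLinf. \<forall>m m'. act g (m + m') = act g m + act g m'"
    and actsm: "\<forall>g\<in>GLinf. \<forall>a m. act g (smult a m) = smult (gactA g a) (act g m)"
    using assms(2) unfolding compatible_GL_action_def by auto
  have act0: "act g 0 = 0" if "g \<in> GLinf" for g
    using actadd that by (metis add_cancel_left_left add_0)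
  have phi0: "phi 0 = 0" using phiadd N0 by (metis add_cancel_left_left add_0)
  have phisum: "finite T \<Longrightarrow> (\<forall>a\<in>T. f a \<in> N) \<Longrightarrow> phi (sum f T) = (\<Sum>a\<in>T. phi (f a)) \<and> sum f T \<in> N" for T f
  proof (induction T rule: finite_induct)
    case empty
    then show ?case using phi0 N0 by simp
  next
    case (insert x F)
    then show ?case using phiadd Nadd by simp
  qed
  have "m \<in> ?S" for m
  proof -
    obtain v where v: "v \<in> N" "phi v = m" using phisurj by (metis UNIV_I imageE)
    have "loc_rel smult (m, 1) (0, 1)" using assms(4) unfolding tensor_frac_zero_def by simp
    then obtain u where u: "u \<noteq> 0" "smult u (smult 1 m - smult 1 0) = 0"
      unfolding loc_rel_def by auto
    then have um: "smult u m = 0" using M by (simp add: module.scale_one module.scale_zero_right)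
    define n where "n = Suc (\<Sum>\<mu>\<in>Poly_Mapping.keys u. \<Sum>w\<in>Poly_Mapping.keys \<mu>. snd (Rep_sym2 w))"
    define B where "B = 2 * Suc (\<Sum>\<mu>\<in>Poly_Mapping.keys u. \<Sum>w\<in>Poly_Mapping.keys \<mu>. Poly_Mapping.lookup \<mu> w)"
    have K: "Poly_Mapping.keys \<mu> \<subseteq> Vn n" if "\<mu> \<in> Poly_Mapping.keys u" for \<mu>
    proof
      fix w assume w: "w \<in> Poly_Mapping.keys \<mu>"
      have "snd (Rep_sym2 w) \<le> (\<Sum>w\<in>Poly_Mapping.keys \<mu>. snd (Rep_sym2 w))"
        using w by (intro member_le_sum) auto
      also have "\<dots> \<le> (\<Sum>\<mu>\<in>Poly_Mapping.keys u. \<Sum>w\<in>Poly_Mapping.keys \<mu>. snd (Rep_sym2 w))"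
        using that by (intro member_le_sum) auto
      finally show "w \<in> Vn n" by (simp add: Vn_def n_def)
    qed
    have bnd: "Poly_Mapping.lookup \<mu> w < B" if "\<mu> \<in> Poly_Mapping.keys u" for \<mu> w
    proof (cases "w \<in> Poly_Mapping.keys \<mu>")
      case True
      have "Poly_Mapping.lookup \<mu> w \<le> (\<Sum>w\<in>Poly_Mapping.keys \<mu>. Poly_Mapping.lookup \<mu> w)"
        using True by (intro member_le_sum) auto
      also have "\<dots> \<le> (\<Sum>\<mu>\<in>Poly_Mapping.keys u. \<Sum>w\<in>Poly_Mapping.keys \<mu>. Poly_Mapping.lookup \<mu> w)"
        using that by (intro member_le_sum) auto
      finally show ?thesis by (simp add: B_def)
    next
      case False
      then show ?thesis by (simp add: B_def in_keys_iff)
    qed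
    have B2: "B \<ge> 2" "even B" by (auto simp: B_def)
    define Pu where "Pu = ev (\<lambda>c. [:c:]) (Qv n B) u"
    have Pu: "Pu \<noteq> 0" unfolding Pu_def by (rule P_nonzero[OF B2 u(1) K bnd])
    define Good where "Good = {t::complex. t \<noteq> 0 \<and> poly Pu t \<noteq> 0}"
    have "finite (UNIV - Good)"
    proof (rule finite_subset)
      show "UNIV - Good \<subseteq> insert 0 {t. poly Pu t = 0}" by (auto simp: Good_def)
      show "finite (insert 0 {t. poly Pu t = 0})" using poly_roots_finite[OF Pu] by simp
    qed
    then have "infinite Good"
      using infinite_UNIV_char_0 by (metis Diff_infinite_finite finite_Diff2)
    then obtain T where T: "finite T" "card T = Suc ((\<Sum>p\<in>Poly_Mapping.keys v. length (snd p)) * B ^ (n * n + n))" "T \<subseteq> Good"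
      using infinite_arbitrarily_large by blast
    define Lc where "Lc a = (\<Prod>b\<in>T - {a}. (1 - b) / (a - b))" for a
    have GL: "gt n B a \<in> GLinf" if "a \<in> T" for a
      using that T(3) by (intro gt_GLinf) (auto simp: Good_def)
    have vT: "v = (\<Sum>a\<in>T. tscale (Lc a) (tact (gt n B a) v))"
      unfolding Lc_def by (rule interpolate_v[OF B2(1) T(1) T(2)])
    have inN: "\<forall>a\<in>T. tscale (Lc a) (tact (gt n B a) v) \<in> N"
      using GL Nact Nsc v(1) by blast
    have "m = phi v" using v by simp
    also have "\<dots> = (\<Sum>a\<in>T. phi (tscale (Lc a) (tact (gt n B a) v)))"
      using phisum[OF T(1) inN] vT by metis
    also have "\<dots> = (\<Sum>a\<in>T. smult (constA (Lc a)) (act (gt n B a) m))"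
    proof (intro sum.cong refl)
      fix a assume a: "a \<in> T"
      have "tact (gt n B a) v \<in> N" using GL[OF a] Nact v(1) by blast
      then show "phi (tscale (Lc a) (tact (gt n B a) v)) = smult (constA (Lc a)) (act (gt n B a) m)"
        using phisc phiact GL[OF a] v by simp
    qed
    also have "\<dots> \<in> ?S"
      unfolding ideal_times_def
    proof (rule module.span_sum[OF M], rule module.span_scale[OF M])
      fix a assume a: "a \<in> T"
      have "smult (gactA (gt n B a) u) (act (gt n B a) m) = act (gt n B a) (smult u m)"
        using actsm GL[OF a] by simp
      also have "\<dots> = 0" using um act0[OF GL[OF a]] by simp
      finally have z: "smult (gactA (gt n B a) u) (act (gt n B a) m) = 0" .
      have "evI (gactA (gt n B a) u) = poly Pu a" by (simp add: evI_gactA_gt Pu_def)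
      also have "\<dots> \<noteq> 0" using a T(3) by (auto simp: Good_def)
      finally have "evI (gactA (gt n B a) u) \<noteq> 0" .
      then have "act (gt n B a) m \<in> ?S" by (rule step_b[OF M z])
      then show "act (gt n B a) m \<in> module.span smult {smult a m |a m. a \<in> max_ideal}"
        by (simp add: ideal_times_def)
    qed
    finally show ?thesis .
  qed
  then show ?thesis by auto
qed


end
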